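(* Let $0<r<1$ and let $T\in C_{1,r}$ act on a Hilbert space $\mathcal H$. Then there exists a unique orthogonal decomposition $\mathcal H=\mathcal H_1\oplus\mathcal H_2$ into closed subspaces reducing $T$ such that (1) $T|_{\mathcal H_1}\in\mathcal C_{1,r}$ and (2) $T|_{\mathcal H_2}$ is a c.n.u. $C_{1,r}$-contraction. Moreover, $\mathcal H_1$ is the maximal closed subspace reducing $T$ restricted to which $T\in\mathcal C_{1,r}$, and $$\mathcal H_1=\bigcap_{k\in\mathbb N}\ \bigcap_{n,m\in(\mathbb N\cup\{0\})^k}\left\{x\in\mathcal H: (1+r^2)\|p_{k,nm}(T)x\|^2-\|Tp_{k,nm}(T)x\|^2-r^2\|T^{-*}p_{k,nm}(T)x\|^2=0\right\},$$ where $p_{k,nm}(T)=T^{n_1}T^{*m_1}\cdots T^{n_k}T^{*m_k}$ for $n=(n_1,\dots,n_k)$, $m=(m_1,\dots,m_k)\in(\mathbb N\cup\{0\})^k$.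
   Context: $C_{1,r}=\{T: T\text{ invertible},\ \|T\|\le1,\ \|rT^{-1}\|\le1\}$. $\mathcal C_{1,r}$ is the class of operators $J$ on a Hilbert space $\mathcal L$ for which there exist orthogonal projections $P_0,P_1$ on $\mathcal L$ with $P_0+P_1=I_{\mathcal L}$ and $J^*J=P_0+r^2P_1$. An operator $T\in C_{1,r}$ on $\mathcal H$ is a c.n.u. $C_{1,r}$-contraction if $\mathcal H$ has no non-zero closed subspace that reduces $T$ to an operator in $\mathcal C_{1,r}$. $T^{-*}=(T^{-1})^*$. *)

theory Defs
  imports "HOL-Analysis.Analysis"
begin

text \<open>A complex Hilbert space, encoded as a real Hilbert space together with an
orthogonal complex structure cJ (multiplication by the imaginary unit):
(a + b i) x = a x + b (cJ x).  The complex inner product is recovered as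
inner x y + i inner x (cJ y); norms coincide.\<close>

class complex_hilbert = real_inner + complete_space +
  fixes cJ :: "'a \<Rightarrow> 'a"
  assumes cJ_add: "cJ (x + y) = cJ x + cJ y"
    and cJ_scaleR: "cJ (c *\<^sub>R x) = c *\<^sub>R cJ x"
    and cJ_cJ: "cJ (cJ x) = - x"
    and cJ_inner: "inner (cJ x) (cJ y) = inner x y"

definition cblin :: "('a::complex_hilbert \<Rightarrow> 'a) \<Rightarrow> bool" where
  "cblin T \<longleftrightarrow> bounded_linear T \<and> (\<forall>x. T (cJ x) = cJ (T x))"

definition closed_csubspace :: "'a::complex_hilbert set \<Rightarrow> bool" where
  "closed_csubspace M \<longleftrightarrow> closed M \<and> subspace M \<and> (\<forall>x\<in>M. cJ x \<in> M)"

definition adj_on :: "'a::complex_hilbert set \<Rightarrow> ('a \<Rightarrow> 'a) \<Rightarrow> 'a \<Rightarrow> 'a" where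
  "adj_on M T y = (SOME z. z \<in> M \<and> (\<forall>x\<in>M. inner (T x) y = inner x z))"

abbreviation adj :: "('a::complex_hilbert \<Rightarrow> 'a) \<Rightarrow> 'a \<Rightarrow> 'a" where
  "adj T \<equiv> adj_on UNIV T"

definition reduces_within :: "'a::complex_hilbert set \<Rightarrow> ('a \<Rightarrow> 'a) \<Rightarrow> 'a set \<Rightarrow> bool" where
  "reduces_within M T N \<longleftrightarrow> closed_csubspace N \<and> N \<subseteq> M \<and>
     (\<forall>x\<in>N. T x \<in> N) \<and> (\<forall>x\<in>N. adj_on M T x \<in> N)"

abbreviation reduces :: "('a::complex_hilbert \<Rightarrow> 'a) \<Rightarrow> 'a set \<Rightarrow> bool" where
  "reduces T N \<equiv> reduces_within UNIV T N"

definition orth_proj_on :: "'a::complex_hilbert set \<Rightarrow> ('a \<Rightarrow> 'a) \<Rightarrow> bool" where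
  "orth_proj_on M P \<longleftrightarrow> cblin P \<and> (\<forall>x\<in>M. P x \<in> M) \<and> (\<forall>x\<in>M. P (P x) = P x) \<and>
     (\<forall>x\<in>M. \<forall>y\<in>M. inner (P x) y = inner x (P y))"

definition C1r_on :: "real \<Rightarrow> 'a::complex_hilbert set \<Rightarrow> ('a \<Rightarrow> 'a) \<Rightarrow> bool" where
  "C1r_on r M T \<longleftrightarrow> (\<forall>x\<in>M. T x \<in> M) \<and>
     (\<exists>S. (\<forall>x\<in>M. S x \<in> M \<and> S (T x) = x \<and> T (S x) = x) \<and>
          (\<forall>x\<in>M. norm (T x) \<le> norm x) \<and> (\<forall>x\<in>M. norm (r *\<^sub>R S x) \<le> norm x))"

definition CC1r_on :: "real \<Rightarrow> 'a::complex_hilbert set \<Rightarrow> ('a \<Rightarrow> 'a) \<Rightarrow> bool" where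
  "CC1r_on r M T \<longleftrightarrow> (\<forall>x\<in>M. T x \<in> M) \<and>
     (\<exists>P0 P1. orth_proj_on M P0 \<and> orth_proj_on M P1 \<and> (\<forall>x\<in>M. P0 x + P1 x = x) \<and>
        (\<forall>x\<in>M. adj_on M T (T x) = P0 x + r\<^sup>2 *\<^sub>R P1 x))"

definition cnu_on :: "real \<Rightarrow> 'a::complex_hilbert set \<Rightarrow> ('a \<Rightarrow> 'a) \<Rightarrow> bool" where
  "cnu_on r M T \<longleftrightarrow> C1r_on r M T \<and>
     \<not> (\<exists>N. reduces_within M T N \<and> N \<noteq> {0} \<and> CC1r_on r N T)"

text \<open>p_{k,nm}(T) = T^{n_1} T^{*m_1} ... T^{n_k} T^{*m_k}, for lists ns, ms of length k.\<close>
definition pword :: "('a::complex_hilbert \<Rightarrow> 'a) \<Rightarrow> nat list \<Rightarrow> nat list \<Rightarrow> 'a \<Rightarrow> 'a" where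
  "pword T ns ms = foldr (\<lambda>(n, m) acc. (T ^^ n) \<circ> (adj T ^^ m) \<circ> acc) (zip ns ms) id"

end

theory Submission
  imports Defs
begin



lemma near_point:
  fixes x :: "'a::real_normed_vector"
  assumes "M \<noteq> {}" "e > 0"
  shows "\<exists>m\<in>M. (norm (x - m))\<^sup>2 < (infdist x M)\<^sup>2 + e"
proof -
  let ?d = "infdist x M"
  have "?d < sqrt (?d\<^sup>2 + e)"
    using assms by (intro real_less_rsqrt) simp
  then obtain m where m: "m \<in> M" "dist x m < sqrt (?d\<^sup>2 + e)"
    using assms(1) unfolding infdist_def by (auto simp: cINF_less_iff)
  have "(norm (x - m))\<^sup>2 < (sqrt (?d\<^sup>2 + e))\<^sup>2"
    using m(2) by (simp add: dist_norm power_strict_mono)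
  also have "\<dots> = ?d\<^sup>2 + e" using assms by simp
  finally show ?thesis using m(1) by blast
qed

lemma quad_zero:
  fixes a b :: real
  assumes "\<And>t. 0 \<le> - 2 * t * a + t\<^sup>2 * b" "b \<ge> 0"
  shows "a = 0"
proof (rule ccontr)
  assume a: "a \<noteq> 0"
  define t where "t = a / (b+1)"
  have tb: "t * (b+1) = a" using assms(2) by (simp add: t_def)
  have aa: "a * a > 0" using a by (auto simp: zero_less_mult_iff linorder_neq_iff)
  have ta: "t * a > 0" using aa assms(2) by (simp add: t_def field_simps)
  have "t\<^sup>2 * b \<le> t\<^sup>2 * (b+1)" by (simp add: mult_left_mono)
  also have "\<dots> = t * a" using tb by (simp add: power2_eq_square mult.assoc)
  finally have "- 2 * t * a + t\<^sup>2 * b < 0" using ta by linarith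
  thus False using assms(1)[of t] by linarith
qed

lemma proj_exists:
  fixes x :: "'a::{real_inner,complete_space}"
  assumes "closed M" "subspace M"
  shows "\<exists>m\<in>M. \<forall>u\<in>M. inner (x - m) u = 0"
proof -
  define d where "d = infdist x M"
  have ne: "M \<noteq> {}" using assms(2) subspace_0 by blast
  have dle: "d \<le> norm (x - u)" if "u \<in> M" for u
    using infdist_le[OF that, of x] by (simp add: d_def dist_norm)
  have d0: "d \<ge> 0" by (simp add: d_def infdist_nonneg)
  have "\<forall>n. \<exists>m\<in>M. (norm (x - m))\<^sup>2 < d\<^sup>2 + 1 / real (Suc n)"
    using near_point[OF ne] d_def by simp
  then obtain f where f: "\<And>n. f n \<in> M" "\<And>n. (norm (x - f n))\<^sup>2 < d\<^sup>2 + 1 / real (Suc n)"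
    by metis
  have par: "(norm (f i - f j))\<^sup>2 < 2 / real (Suc i) + 2 / real (Suc j)" for i j
  proof -
    have mid: "(1/2) *\<^sub>R (f i + f j) \<in> M"
      using f(1) assms(2) by (simp add: subspace_add subspace_scale)
    have "d\<^sup>2 \<le> (norm (x - (1/2) *\<^sub>R (f i + f j)))\<^sup>2"
      using dle[OF mid] d0 by (simp add: power_mono)
    moreover have "(norm (f i - f j))\<^sup>2 = 2 * (norm (x - f i))\<^sup>2 + 2 * (norm (x - f j))\<^sup>2
        - 4 * (norm (x - (1/2) *\<^sub>R (f i + f j)))\<^sup>2"
      by (simp add: power2_norm_eq_inner inner_simps algebra_simps inner_commute)
    ultimately show ?thesis using f(2)[of i] f(2)[of j] by linarith
  qed
  have "Cauchy f"
  proof (rule metric_CauchyI)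
    fix e :: real assume e: "e > 0"
    obtain N :: nat where N: "4 / e\<^sup>2 < real N" using reals_Archimedean2 by blast
    have e2: "e\<^sup>2 > 0" using e by simp
    have N1: "4 < real N * e\<^sup>2" using N e2 by (simp add: field_simps)
    have N': "4 / real (Suc N) < e\<^sup>2"
      proof -
      have "real (Suc N) * e\<^sup>2 = real N * e\<^sup>2 + e\<^sup>2" by (simp add: algebra_simps)
      hence "4 < real (Suc N) * e\<^sup>2" using N1 e2 by linarith
      thus ?thesis by (simp add: divide_less_eq mult.commute)
    qed
    show "\<exists>M. \<forall>m\<ge>M. \<forall>n\<ge>M. dist (f m) (f n) < e"
    proof (intro exI allI impI)
      fix m n assume mn: "m \<ge> N" "n \<ge> N"
      have "2 / real (Suc m) \<le> 2 / real (Suc N)" "2 / real (Suc n) \<le> 2 / real (Suc N)"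
        using mn by (simp_all add: frac_le)
      hence "(dist (f m) (f n))\<^sup>2 < e\<^sup>2"
        using par[of m n] N' by (simp add: dist_norm)
      thus "dist (f m) (f n) < e" using e by (simp add: power_less_imp_less_base)
    qed
  qed
  then obtain m where lim: "f \<longlonglongrightarrow> m" using Cauchy_convergent_iff convergent_def by blast
  have mM: "m \<in> M" using closed_sequentially[OF assms(1)] f(1) lim by blast
  have "(\<lambda>n. (norm (x - f n))\<^sup>2) \<longlonglongrightarrow> (norm (x - m))\<^sup>2"
    by (intro tendsto_intros lim)
  moreover have "(\<lambda>n. d\<^sup>2 + 1 / real (Suc n)) \<longlonglongrightarrow> d\<^sup>2 + 0"
    by (intro tendsto_intros LIMSEQ_inverse_real_of_nat[unfolded inverse_eq_divide])
  ultimately have mle: "(norm (x - m))\<^sup>2 \<le> d\<^sup>2"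
    using f(2) by (intro LIMSEQ_le[where X="\<lambda>n. (norm (x - f n))\<^sup>2"]) (auto intro: less_imp_le)
  show ?thesis
  proof (intro bexI[OF _ mM] ballI)
    fix u assume u: "u \<in> M"
    have "0 \<le> - 2 * t * inner (x - m) u + t\<^sup>2 * inner u u" for t
    proof -
      have "m + t *\<^sub>R u \<in> M" using u mM assms(2) by (simp add: subspace_add subspace_scale)
      hence "d\<^sup>2 \<le> (norm (x - (m + t *\<^sub>R u)))\<^sup>2" using dle d0 by (simp add: power_mono)
      also have "\<dots> = (norm (x - m))\<^sup>2 - 2 * t * inner (x - m) u + t\<^sup>2 * inner u u"
        unfolding power2_norm_eq_inner by (simp add: inner_simps algebra_simps inner_commute power2_eq_square)
      finally show ?thesis using mle by linarith
    qed
    thus "inner (x - m) u = 0" by (rule quad_zero) simp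
  qed
qed


lemma inner_ext:
  fixes a b :: "'a::real_inner"
  assumes "\<And>x. inner x a = inner x b"
  shows "a = b"
proof -
  have "inner (a - b) (a - b) = 0" using assms[of "a - b"] by (simp add: inner_diff_right)
  thus ?thesis by simp
qed

lemma riesz:
  fixes f :: "'a::{real_inner,complete_space} \<Rightarrow> real"
  assumes bl: "bounded_linear f"
  shows "\<exists>z. \<forall>x. f x = inner x z"
proof (cases "\<forall>x. f x = 0")
  case True thus ?thesis by (intro exI[of _ 0]) simp
next
  case False
  then obtain x0 where x0: "f x0 \<noteq> 0" by blast
  interpret f: bounded_linear f by fact
  let ?K = "{x. f x = 0}"
  have cK: "closed ?K"
    by (intro closed_Collect_eq continuous_intros f.continuous_on continuous_on_id)
  have sK: "subspace ?K"
    by (auto simp: subspace_def f.add f.scale)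
  obtain m where m: "m \<in> ?K" "\<And>u. u \<in> ?K \<Longrightarrow> inner (x0 - m) u = 0"
    using proj_exists[OF cK sK, of x0] by blast
  define w where "w = x0 - m"
  have fw: "f w \<noteq> 0" using m(1) x0 by (simp add: w_def f.diff)
  have ww: "inner w w \<noteq> 0"
  proof
    assume "inner w w = 0" hence "w = 0" by simp
    thus False using fw by (simp add: f.zero)
  qed
  have "f x = inner x ((f w / inner w w) *\<^sub>R w)" for x
  proof -
    have "x - (f x / f w) *\<^sub>R w \<in> ?K" using fw by (simp add: f.diff f.scale)
    hence "inner w (x - (f x / f w) *\<^sub>R w) = 0" using m(2) by (simp add: w_def)
    hence "inner w x = (f x / f w) * inner w w" by (simp add: inner_diff_right)
    thus ?thesis using fw ww by (simp add: field_simps inner_commute)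
  qed
  thus ?thesis by blast
qed

lemma adj_exists:
  fixes U :: "'a::complex_hilbert \<Rightarrow> 'a"
  assumes "bounded_linear U"
  shows "\<exists>z. \<forall>x. inner (U x) y = inner x z"
proof -
  have "bounded_linear (\<lambda>x. inner (U x) y)"
    using bounded_linear_compose[OF bounded_linear_inner_left assms] .
  thus ?thesis using riesz by blast
qed

lemma adj_prop:
  fixes U :: "'a::complex_hilbert \<Rightarrow> 'a"
  assumes "bounded_linear U"
  shows "inner (U x) y = inner x (adj U y)"
proof -
  have "\<exists>z. z \<in> UNIV \<and> (\<forall>x\<in>UNIV. inner (U x) y = inner x z)" using adj_exists[OF assms] by blast
  from someI_ex[OF this] show ?thesis unfolding adj_on_def by blast
qed

lemma adj_on_eqI:
  fixes U :: "'a::complex_hilbert \<Rightarrow> 'a"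
  assumes "subspace M" "z \<in> M" "\<And>u. u \<in> M \<Longrightarrow> inner (U u) y = inner u z"
  shows "adj_on M U y = z"
proof -
  have "\<exists>z. z \<in> M \<and> (\<forall>x\<in>M. inner (U x) y = inner x z)" using assms by blast
  from someI_ex[OF this] have z': "adj_on M U y \<in> M" "\<And>x. x \<in> M \<Longrightarrow> inner (U x) y = inner x (adj_on M U y)"
    unfolding adj_on_def by blast+
  have d: "z - adj_on M U y \<in> M" using assms(1,2) z'(1) by (simp add: subspace_diff)
  have "inner (z - adj_on M U y) (z - adj_on M U y) = 0"
    using assms(3)[OF d] z'(2)[OF d] by (simp add: inner_diff_right inner_diff_left inner_commute)
  thus ?thesis by simp
qed

lemma cJ_linear: "linear (cJ :: 'a::complex_hilbert \<Rightarrow> 'a)"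
  by (rule linearI) (simp_all add: cJ_add cJ_scaleR)

lemma cJ_swap: "inner (cJ a) b = - inner a (cJ (b::'a::complex_hilbert))"
proof -
  have "inner (cJ a) b = inner (cJ (cJ a)) (cJ b)" by (simp add: cJ_inner)
  thus ?thesis by (simp add: cJ_cJ)
qed

lemma cJ_zero_iff: "cJ (x::'a::complex_hilbert) = 0 \<longleftrightarrow> x = 0"
  by (metis cJ_cJ linear_0[OF cJ_linear] neg_equal_0_iff_equal)

lemma adj_bounded_linear:
  fixes U :: "'a::complex_hilbert \<Rightarrow> 'a"
  assumes bl: "bounded_linear U"
  shows "bounded_linear (adj U)"
proof -
  have add: "adj U (a + b) = adj U a + adj U b" for a b
    by (rule inner_ext) (metis adj_prop[OF bl] inner_add_right)
  have sc: "adj U (c *\<^sub>R a) = c *\<^sub>R adj U a" for c a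
    by (rule inner_ext) (metis adj_prop[OF bl] inner_scaleR_right)
  obtain K where K: "K > 0" "\<And>x. norm (U x) \<le> norm x * K"
    using bounded_linear.pos_bounded[OF bl] by blast
  have "norm (adj U y) \<le> norm y * K" for y
  proof (cases "adj U y = 0")
    case True thus ?thesis using K by simp
  next
    case False
    have "(norm (adj U y))\<^sup>2 = inner (U (adj U y)) y"
      by (simp add: adj_prop[OF bl] power2_norm_eq_inner)
    also have "\<dots> \<le> norm (U (adj U y)) * norm y" by (metis Cauchy_Schwarz_ineq2 abs_le_D1)
    also have "\<dots> \<le> norm (adj U y) * K * norm y" using K(2) by (simp add: mult_right_mono)
    finally have "norm (adj U y) * norm (adj U y) \<le> norm (adj U y) * (norm y * K)"
      by (simp add: power2_eq_square algebra_simps)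
    thus ?thesis using False by simp
  qed
  thus ?thesis by (intro bounded_linear_intro[OF add sc]) 
qed

lemma adj_cJ:
  fixes U :: "'a::complex_hilbert \<Rightarrow> 'a"
  assumes "cblin U"
  shows "adj U (cJ y) = cJ (adj U y)"
proof -
  have bl: "bounded_linear U" and c: "\<And>x. U (cJ x) = cJ (U x)" using assms by (auto simp: cblin_def)
  show ?thesis
  proof (rule inner_ext)
    fix x
    have "inner x (adj U (cJ y)) = inner (U x) (cJ y)" by (simp add: adj_prop[OF bl])
    also have "\<dots> = - inner (cJ (U x)) y" by (simp add: cJ_swap)
    also have "\<dots> = - inner (U (cJ x)) y" by (simp add: c)
    also have "\<dots> = - inner (cJ x) (adj U y)" by (simp add: adj_prop[OF bl])
    also have "\<dots> = inner x (cJ (adj U y))" by (simp add: cJ_swap)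
    finally show "inner x (adj U (cJ y)) = inner x (cJ (adj U y))" .
  qed
qed

lemma adj_cblin:
  fixes U :: "'a::complex_hilbert \<Rightarrow> 'a"
  assumes "cblin U"
  shows "cblin (adj U)"
  using assms adj_bounded_linear adj_cJ by (auto simp: cblin_def)




lemma form_zero:
  fixes D :: "'a::real_inner \<Rightarrow> 'a"
  assumes lin: "linear D" and sym: "\<And>x y. inner (D x) y = inner x (D y)"
    and pos: "\<And>x. inner (D x) x \<ge> 0" and z: "inner (D y) y = 0"
  shows "D y = 0"
proof -
  interpret D: linear D by fact
  have "\<And>t. 0 \<le> - 2 * t * (- inner (D y) (D y)) + t\<^sup>2 * inner (D (D y)) (D y)"
  proof -
    fix t
    have "0 \<le> inner (D (y + t *\<^sub>R D y)) (y + t *\<^sub>R D y)" by (rule pos)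
    also have "\<dots> = inner (D y) y + 2 * t * inner (D y) (D y) + t\<^sup>2 * inner (D (D y)) (D y)"
      using sym[of y "D y"] sym[of "D y" y]
      by (simp add: D.add D.scale inner_add_left inner_add_right power2_eq_square algebra_simps inner_commute)
    finally show "0 \<le> - 2 * t * (- inner (D y) (D y)) + t\<^sup>2 * inner (D (D y)) (D y)"
      using z by simp
  qed
  from quad_zero[OF this pos] show ?thesis by simp
qed

locale C1r =
  fixes T :: "'a::complex_hilbert \<Rightarrow> 'a" and r :: real and S :: "'a \<Rightarrow> 'a"
  assumes r0: "0 < r" and r1: "r < 1" and cb: "cblin T"
    and ST: "\<And>x. S (T x) = x" and TS: "\<And>x. T (S x) = x"
    and nT: "\<And>x. norm (T x) \<le> norm x" and nS: "\<And>x. norm (r *\<^sub>R S x) \<le> norm x"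
begin

lemma blT: "bounded_linear T" using cb by (simp add: cblin_def)
lemma cJT: "T (cJ x) = cJ (T x)" using cb by (simp add: cblin_def)

interpretation T: bounded_linear T by (rule blT)

lemma blS: "bounded_linear S"
proof (rule bounded_linear_intro)
  show "S (x + y) = S x + S y" for x y by (metis ST TS T.add)
  show "S (c *\<^sub>R x) = c *\<^sub>R S x" for c x by (metis ST TS T.scale)
  show "norm (S x) \<le> norm x * (1 / r)" for x
    using nS[of x] r0 by (simp add: field_simps)
qed

interpretation S: bounded_linear S by (rule blS)

lemma cJS: "S (cJ x) = cJ (S x)" by (metis ST TS cJT)
lemma cbS: "cblin S" using blS cJS by (simp add: cblin_def)

lemma invT: "inv T = S"
proof
  fix y
  have "inj T" by (metis ST injI)
  hence "inv T (T (S y)) = S y" by (rule inv_f_f)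
  thus "inv T y = S y" by (simp add: TS)
qed

definition "Ta = adj T"
definition "Sa = adj S"
definition "A x = Ta (T x)"
definition "G x = S (Sa x)"
definition "D y = (1 + r\<^sup>2) *\<^sub>R y - A y - r\<^sup>2 *\<^sub>R G y"

lemma Ta: "inner (T x) y = inner x (Ta y)" unfolding Ta_def by (rule adj_prop[OF blT])
lemma Sa: "inner (S x) y = inner x (Sa y)" unfolding Sa_def by (rule adj_prop[OF blS])
lemma cbTa: "cblin Ta" unfolding Ta_def by (rule adj_cblin[OF cb])
lemma cbSa: "cblin Sa" unfolding Sa_def by (rule adj_cblin[OF cbS])
lemma blTa: "bounded_linear Ta" using cbTa by (simp add: cblin_def)
lemma blSa: "bounded_linear Sa" using cbSa by (simp add: cblin_def)
lemma cJTa: "Ta (cJ x) = cJ (Ta x)" using cbTa by (simp add: cblin_def)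
lemma cJSa: "Sa (cJ x) = cJ (Sa x)" using cbSa by (simp add: cblin_def)

interpretation Ta: bounded_linear Ta by (rule blTa)
interpretation Sa: bounded_linear Sa by (rule blSa)

lemma TaSa: "Ta (Sa y) = y"
  by (rule inner_ext[symmetric]) (metis Ta Sa ST)
lemma SaTa: "Sa (Ta y) = y"
  by (rule inner_ext[symmetric]) (metis Ta Sa TS)
lemma AG: "A (G y) = y" by (simp add: A_def G_def TS TaSa)
lemma GA: "G (A y) = y" by (simp add: A_def G_def ST SaTa)

lemma blA: "bounded_linear A"
  unfolding A_def[abs_def] using bounded_linear_compose[OF blTa blT] by (simp add: o_def)
lemma blG: "bounded_linear G"
  unfolding G_def[abs_def] using bounded_linear_compose[OF blS blSa] by (simp add: o_def)
interpretation A: bounded_linear A by (rule blA)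
interpretation G: bounded_linear G by (rule blG)
lemma blD: "bounded_linear D"
  unfolding D_def[abs_def]
  by (intro bounded_linear_sub bounded_linear_const_scaleR bounded_linear_ident blA blG)
interpretation D: bounded_linear D by (rule blD)

lemma cJA: "A (cJ x) = cJ (A x)" by (simp add: A_def cJT cJTa)
lemma cJG: "G (cJ x) = cJ (G x)" by (simp add: G_def cJS cJSa)
lemma cJD: "D (cJ x) = cJ (D x)"
  by (simp add: D_def cJA cJG cJ_scaleR linear_diff[OF cJ_linear])

lemma Asym: "inner (A x) y = inner x (A y)"
  by (metis A_def Ta inner_commute)
lemma Gsym: "inner (G x) y = inner x (G y)"
  by (metis G_def Sa inner_commute)
lemma Dsym: "inner (D x) y = inner x (D y)"
  by (simp add: D_def inner_diff_left inner_diff_right Asym Gsym)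

lemma Aform: "inner (A x) x = (norm (T x))\<^sup>2"
  by (metis A_def Ta inner_commute power2_norm_eq_inner)
lemma Gform: "inner (G x) x = (norm (Sa x))\<^sup>2"
  by (metis G_def Sa power2_norm_eq_inner)

lemma Ale: "inner (A x) x \<le> inner x x"
  using nT[of x] by (simp add: Aform power2_norm_eq_inner[symmetric] power_mono)
lemma Age: "r\<^sup>2 * inner x x \<le> inner (A x) x"
proof -
  have "norm (r *\<^sub>R x) \<le> norm (T x)" using nS[of "T x"] by (simp add: ST)
  hence "(norm (r *\<^sub>R x))\<^sup>2 \<le> (norm (T x))\<^sup>2" by (simp add: power_mono)
  thus ?thesis by (simp add: Aform power2_norm_eq_inner[symmetric] power_mult_distrib)
qed

lemma Dform: "inner (D y) y = (1 + r\<^sup>2) * (norm y)\<^sup>2 - (norm (T y))\<^sup>2 - r\<^sup>2 * (norm (Sa y))\<^sup>2"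
  by (simp add: D_def inner_diff_left Aform Gform power2_norm_eq_inner)

lemma Dpos: "inner (D y) y \<ge> 0"
proof -
  define w where "w = G y"
  have y: "y = A w" by (simp add: w_def AG)
  define B where "B z = A z - r\<^sup>2 *\<^sub>R z" for z
  define C where "C z = z - A z" for z
  have Bpos: "inner (B z) z \<ge> 0" for z using Age[of z] by (simp add: B_def inner_diff_left)
  have Cpos: "inner (C z) z \<ge> 0" for z using Ale[of z] by (simp add: C_def inner_diff_left)
  have Bsym: "inner (B a) b = inner a (B b)" for a b
    by (simp add: B_def inner_diff_left inner_diff_right Asym)
  have Csym: "inner (C a) b = inner a (C b)" for a b
    by (simp add: C_def inner_diff_left inner_diff_right Asym)
  have DA: "D (A w) = B (C w)"
    by (simp add: D_def B_def C_def GA A.diff A.scale algebra_simps)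
  have BC: "B (C w) = C (B w)"
    by (simp add: B_def C_def A.diff A.scale algebra_simps)
  have Aw: "A w = r\<^sup>2 *\<^sub>R w + B w" by (simp add: B_def)
  have BCw: "B w + C w = (1 - r\<^sup>2) *\<^sub>R w" by (simp add: B_def C_def algebra_simps)
  have p1: "inner (B (C w)) (B w) \<ge> 0" using Cpos[of "B w"] BC by simp
  have p2: "inner (B (C w)) (C w) \<ge> 0" using Bpos[of "C w"] by simp
  have "(1 - r\<^sup>2) * inner (B (C w)) w = inner (B (C w)) (B w + C w)"
    by (simp add: BCw)
  also have "\<dots> \<ge> 0" using p1 p2 by (simp add: inner_add_right)
  finally have "(1 - r\<^sup>2) * inner (B (C w)) w \<ge> 0" .
  moreover have "1 - r\<^sup>2 > 0" using r0 r1 by (simp add: power_less_one_iff abs_less_iff)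
  ultimately have p3: "inner (B (C w)) w \<ge> 0" by (simp add: zero_le_mult_iff)
  have "inner (D y) y = r\<^sup>2 * inner (B (C w)) w + inner (B (C w)) (B w)"
    using y DA Aw by (simp add: inner_add_right)
  thus ?thesis using p1 p3 by simp
qed

lemma Dzero: "inner (D y) y = 0 \<longleftrightarrow> D y = 0"
  using form_zero[OF D.linear_axioms Dsym Dpos] by auto

end



lemma cblin_id: "cblin id" by (simp add: cblin_def bounded_linear_ident[unfolded id_def[symmetric]])
lemma cblin_id': "cblin (\<lambda>x. x)" using cblin_id by (simp add: id_def)
lemma cblin_comp: "cblin U \<Longrightarrow> cblin V \<Longrightarrow> cblin (U \<circ> V)"
  by (auto simp: cblin_def o_def intro: bounded_linear_compose[unfolded o_def])
lemma cblin_pow: "cblin U \<Longrightarrow> cblin (U ^^ n)"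
  by (induction n) (auto simp: cblin_id cblin_comp)

lemma pword_Nil: "pword T [] [] = id" by (simp add: pword_def)
lemma pword_Cons: "pword T (n # ns) (m # ms) = (T ^^ n) \<circ> (adj T ^^ m) \<circ> pword T ns ms"
  by (simp add: pword_def)
lemma pword_append:
  "length ns1 = length ms1 \<Longrightarrow> pword T (ns1 @ ns2) (ms1 @ ms2) = pword T ns1 ms1 \<circ> pword T ns2 ms2"
proof (induction ns1 arbitrary: ms1)
  case Nil thus ?case by (simp add: pword_Nil)
next
  case (Cons n ns1)
  then obtain m ms1' where "ms1 = m # ms1'" "length ns1 = length ms1'" by (cases ms1) auto
  thus ?case using Cons.IH by (simp add: pword_Cons o_assoc)
qed

lemma pword_cblin: "cblin T \<Longrightarrow> cblin (pword T ns ms)"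
proof (induction ns arbitrary: ms)
  case Nil thus ?case by (simp add: pword_def cblin_id')
next
  case (Cons n ns)
  show ?case
  proof (cases ms)
    case Nil thus ?thesis by (simp add: pword_def cblin_id')
  next
    case (Cons m ms')
    have "cblin (pword T ns ms')" using Cons.IH Cons.prems by blast
    thus ?thesis using Cons.prems unfolding \<open>ms = m # ms'\<close> pword_Cons
      by (intro cblin_comp cblin_pow adj_cblin) auto
  qed
qed

lemma pow_inv: "(\<And>x. x \<in> N \<Longrightarrow> U x \<in> N) \<Longrightarrow> x \<in> N \<Longrightarrow> (U ^^ n) x \<in> N"
  by (induction n) auto

lemma pword_inv:
  assumes "\<And>x. x \<in> N \<Longrightarrow> T x \<in> N" "\<And>x. x \<in> N \<Longrightarrow> adj T x \<in> N" "x \<in> N"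
  shows "pword T ns ms x \<in> N"
  using assms(3)
proof (induction ns arbitrary: ms x)
  case Nil thus ?case by (simp add: pword_def)
next
  case (Cons n ns) thus ?case
  proof (cases ms)
    case Nil thus ?thesis using Cons by (simp add: pword_def)
  next
    case (Cons m ms')
    have "pword T ns ms' x \<in> N" using Cons.IH \<open>x \<in> N\<close> by blast
    thus ?thesis using Cons by (simp add: pword_Cons pow_inv assms(1,2))
  qed
qed

definition orth :: "'a::real_inner set \<Rightarrow> 'a set" where
  "orth M = {y. \<forall>x\<in>M. inner x y = 0}"

lemma orth_closed_csubspace: "closed_csubspace M \<Longrightarrow> closed_csubspace (orth M)"
proof -
  assume M: "closed_csubspace M"
  have "orth M = (\<Inter>x\<in>M. {y. inner x y = 0})" by (auto simp: orth_def)
  moreover have "closed {y. inner x y = 0}" for x :: 'a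
    by (intro closed_Collect_eq continuous_intros)
  ultimately have "closed (orth M)" by auto
  moreover have "subspace (orth M)"
    by (auto simp: subspace_def orth_def inner_add_right)
  moreover have "cJ y \<in> orth M" if "y \<in> orth M" for y
  proof -
    have "inner x (cJ y) = 0" if "x \<in> M" for x
      using \<open>y \<in> orth M\<close> M that cJ_swap[of x y] by (auto simp: orth_def closed_csubspace_def)
    thus ?thesis by (simp add: orth_def)
  qed
  ultimately show ?thesis by (simp add: closed_csubspace_def)
qed

lemma orth_decomp:
  fixes M :: "'a::{real_inner,complete_space} set"
  assumes "closed M" "subspace M"
  shows "\<exists>a\<in>M. \<exists>b\<in>orth M. x = a + b"
proof -
  obtain m where "m \<in> M" "\<forall>u\<in>M. inner (x - m) u = 0" using proj_exists[OF assms] by blast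
  thus ?thesis by (intro bexI[of _ m] bexI[of _ "x - m"]) (auto simp: orth_def inner_commute)
qed

lemma orth_inv:
  fixes U :: "'a::complex_hilbert \<Rightarrow> 'a"
  assumes "bounded_linear U" "\<And>x. x \<in> M \<Longrightarrow> U x \<in> M" "\<And>x. x \<in> M \<Longrightarrow> adj U x \<in> M"
  shows "\<And>y. y \<in> orth M \<Longrightarrow> U y \<in> orth M" "\<And>y. y \<in> orth M \<Longrightarrow> adj U y \<in> orth M"
  using assms adj_prop[OF assms(1)] by (auto simp: orth_def inner_commute) (metis inner_commute)+

lemma orth_inter: "subspace M \<Longrightarrow> x \<in> M \<Longrightarrow> x \<in> orth M \<Longrightarrow> x = 0"
  by (auto simp: orth_def)




context C1r begin

interpretation T: bounded_linear T by (rule blT)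
interpretation S: bounded_linear S by (rule blS)
interpretation Ta: bounded_linear Ta by (rule blTa)
interpretation A: bounded_linear A by (rule blA)
interpretation G: bounded_linear G by (rule blG)
interpretation D: bounded_linear D by (rule blD)

definition "K = (\<Inter>k\<in>{1..}. \<Inter>ns\<in>{ns. length ns = k}. \<Inter>ms\<in>{ms. length ms = k}.
                   {x. (1 + r\<^sup>2) * (norm (pword T ns ms x))\<^sup>2
                       - (norm (T (pword T ns ms x)))\<^sup>2
                       - r\<^sup>2 * (norm (adj (inv T) (pword T ns ms x)))\<^sup>2 = 0})"

lemma K_iff: "x \<in> K \<longleftrightarrow> (\<forall>ns ms. length ns = length ms \<longrightarrow> ns \<noteq> [] \<longrightarrow> D (pword T ns ms x) = 0)"
proof -
  have e: "(1 + r\<^sup>2) * (norm y)\<^sup>2 - (norm (T y))\<^sup>2 - r\<^sup>2 * (norm (adj (inv T) y))\<^sup>2 = 0 \<longleftrightarrow> D y = 0" for y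
    using Dform[of y] Dzero[of y] by (simp add: invT Sa_def)
  have ne: "\<And>ns::nat list. ns \<noteq> [] \<longleftrightarrow> 1 \<le> length ns" by (simp add: Suc_le_eq)
  show ?thesis unfolding K_def e
    apply auto
     apply (metis Suc_leI atLeast_iff length_greater_0_conv)
    apply (metis Suc_le_lessD length_greater_0_conv)
    done
qed

lemma pw_T: "pword T [1] [0] = T" by (simp add: pword_def)
lemma pw_Ta: "pword T [0] [1] = Ta" by (simp add: pword_def Ta_def)
lemma pw_A: "pword T [0,1] [1,0] = A" by (simp add: pword_def Ta_def A_def[abs_def] o_def)

lemma K_T: "x \<in> K \<Longrightarrow> T x \<in> K"
proof -
  assume x: "x \<in> K"
  { fix ns ms :: "nat list" assume l: "length ns = length ms" "ns \<noteq> []"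
    have "pword T (ns @ [1]) (ms @ [0]) x = pword T ns ms (pword T [1] [0] x)"
      by (simp only: pword_append[OF l(1)] o_apply)
    hence "pword T ns ms (T x) = pword T (ns @ [1]) (ms @ [0]) x" by (simp only: pw_T)
    hence "D (pword T ns ms (T x)) = 0" using x l by (simp add: K_iff) }
  thus ?thesis by (simp add: K_iff)
qed

lemma K_Ta: "x \<in> K \<Longrightarrow> Ta x \<in> K"
proof -
  assume x: "x \<in> K"
  { fix ns ms :: "nat list" assume l: "length ns = length ms" "ns \<noteq> []"
    have "pword T (ns @ [0]) (ms @ [1]) x = pword T ns ms (pword T [0] [1] x)"
      by (simp only: pword_append[OF l(1)] o_apply)
    hence "pword T ns ms (Ta x) = pword T (ns @ [0]) (ms @ [1]) x" by (simp only: pw_Ta)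
    hence "D (pword T ns ms (Ta x)) = 0" using x l by (simp add: K_iff) }
  thus ?thesis by (simp add: K_iff)
qed

lemma K_DA: "x \<in> K \<Longrightarrow> D (A x) = 0"
  using pw_A by (simp add: K_iff) (metis list.distinct(1) list.size(4))

lemma cb_pw: "cblin (pword T ns ms)" by (rule pword_cblin[OF cb])

lemma K_closed_csubspace: "closed_csubspace K"
proof -
  let ?W = "{p :: nat list \<times> nat list. length (fst p) = length (snd p) \<and> fst p \<noteq> []}"
  have KW: "K = (\<Inter>p\<in>?W. {x. D (pword T (fst p) (snd p) x) = 0})" by (auto simp: K_iff)
  have "closed {x. D (pword T ns ms x) = 0}" for ns ms
  proof -
    have "bounded_linear (pword T ns ms)" using cb_pw by (simp add: cblin_def)
    hence "bounded_linear (\<lambda>x. D (pword T ns ms x))" using bounded_linear_compose[OF blD] by blast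
    hence "continuous_on UNIV (\<lambda>x. D (pword T ns ms x))" by (simp add: linear_continuous_on)
    thus ?thesis by (intro closed_Collect_eq continuous_on_const) auto
  qed
  hence cl: "closed K" unfolding KW by auto
  have lin: "pword T ns ms (a + b) = pword T ns ms a + pword T ns ms b"
    "pword T ns ms (c *\<^sub>R a) = c *\<^sub>R pword T ns ms a"
    "pword T ns ms (cJ a) = cJ (pword T ns ms a)" for ns ms a b c
    using cb_pw[of ns ms] by (auto simp: cblin_def linear_add linear_scale bounded_linear.linear)
  have z: "pword T ns ms 0 = 0" for ns ms
    using lin(2)[of ns ms 0 0] by simp
  have "subspace K"
  proof (unfold subspace_def, intro conjI ballI allI)
    show "0 \<in> K" by (simp add: K_iff z D.zero)
    fix x y assume "x \<in> K" "y \<in> K" thus "x + y \<in> K" by (simp add: K_iff lin D.add)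
  next
    fix c x assume "x \<in> K" thus "c *\<^sub>R x \<in> K" by (simp add: K_iff lin D.scale)
  qed
  moreover have "cJ x \<in> K" if "x \<in> K" for x
    using that by (simp add: K_iff lin cJD cJ_zero_iff)
  ultimately show ?thesis using cl by (simp add: closed_csubspace_def)
qed

end



context C1r begin

interpretation T: bounded_linear T by (rule blT)
interpretation S: bounded_linear S by (rule blS)
interpretation Ta: bounded_linear Ta by (rule blTa)
interpretation A: bounded_linear A by (rule blA)
interpretation G: bounded_linear G by (rule blG)
interpretation D: bounded_linear D by (rule blD)

lemma r2: "0 < 1 - r\<^sup>2" using r0 r1 by (simp add: power_less_one_iff abs_less_iff)

lemma adjA:
  assumes "subspace N" "\<And>x. x \<in> N \<Longrightarrow> T x \<in> N" "\<And>x. x \<in> N \<Longrightarrow> Ta x \<in> N" "y \<in> N"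
  shows "adj_on N T (T y) = A y"
  by (rule adj_on_eqI[OF assms(1)]) (auto simp: A_def assms Ta)

lemma CC1r_L:
  assumes N: "subspace N" "\<And>x. x \<in> N \<Longrightarrow> T x \<in> N" "\<And>x. x \<in> N \<Longrightarrow> Ta x \<in> N"
    and DA: "\<And>x. x \<in> N \<Longrightarrow> D (A x) = 0"
  shows "CC1r_on r N T"
proof -
  define c where "c = 1 / (1 - r\<^sup>2)"
  have c: "c * (1 - r\<^sup>2) = 1" using r2 by (simp add: c_def)
  define E where "E z = c *\<^sub>R (A z - r\<^sup>2 *\<^sub>R z)" for z
  define F where "F z = c *\<^sub>R (z - A z)" for z
  have AN: "A x \<in> N" if "x \<in> N" for x using N that by (simp add: A_def)
  have AA: "A (A x) = (1 + r\<^sup>2) *\<^sub>R A x - r\<^sup>2 *\<^sub>R x" if "x \<in> N" for x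
    using DA[OF that] by (simp add: D_def GA algebra_simps)
  have blE: "bounded_linear E" unfolding E_def[abs_def]
    by (intro bounded_linear_const_scaleR bounded_linear_sub blA bounded_linear_ident)
  have blF: "bounded_linear F" unfolding F_def[abs_def]
    by (intro bounded_linear_const_scaleR bounded_linear_sub blA bounded_linear_ident)
  have cJl: "cJ (a - b) = cJ a - cJ b" for a b by (rule linear_diff[OF cJ_linear])
  have cbE: "cblin E" using blE by (simp add: cblin_def E_def cJA cJ_scaleR cJl)
  have cbF: "cblin F" using blF by (simp add: cblin_def F_def cJA cJ_scaleR cJl)
  have symE: "inner (E x) y = inner x (E y)" for x y
    by (simp add: E_def inner_diff_left inner_diff_right Asym)
  have symF: "inner (F x) y = inner x (F y)" for x y
    by (simp add: F_def inner_diff_left inner_diff_right Asym)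
  have EN: "E x \<in> N" if "x \<in> N" for x
    using N(1) AN[OF that] that by (simp add: E_def subspace_diff subspace_scale)
  have FN: "F x \<in> N" if "x \<in> N" for x
    using N(1) AN[OF that] that by (simp add: F_def subspace_diff subspace_scale)
  have EE: "E (E x) = E x" if "x \<in> N" for x
  proof -
    have "E (E x) = (c * c) *\<^sub>R (A (A x) - r\<^sup>2 *\<^sub>R A x - r\<^sup>2 *\<^sub>R A x + (r\<^sup>2 * r\<^sup>2) *\<^sub>R x)"
      by (simp add: E_def A.diff A.scale algebra_simps scaleR_diff_right)
    also have "\<dots> = (c * c) *\<^sub>R ((1 - r\<^sup>2) *\<^sub>R (A x - r\<^sup>2 *\<^sub>R x))"
      by (simp add: AA[OF that] algebra_simps)
    also have "\<dots> = E x" using c by (simp add: E_def)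
    finally show ?thesis .
  qed
  have FF: "F (F x) = F x" if "x \<in> N" for x
  proof -
    have "F (F x) = (c * c) *\<^sub>R (x - A x - A x + A (A x))"
      by (simp add: F_def A.diff A.scale algebra_simps scaleR_diff_right)
    also have "\<dots> = (c * c) *\<^sub>R ((1 - r\<^sup>2) *\<^sub>R (x - A x))"
      by (simp add: AA[OF that] algebra_simps)
    also have "\<dots> = F x" using c by (simp add: F_def)
    finally show ?thesis .
  qed
  have EF: "E x + F x = x" for x
  proof -
    have "E x + F x = (c * (1 - r\<^sup>2)) *\<^sub>R x" by (simp add: E_def F_def algebra_simps)
    thus ?thesis using c by simp
  qed
  have AEF: "A x = E x + r\<^sup>2 *\<^sub>R F x" for x
  proof -
    have "E x + r\<^sup>2 *\<^sub>R F x = (c * (1 - r\<^sup>2)) *\<^sub>R A x" by (simp add: E_def F_def algebra_simps)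
    thus ?thesis using c by simp
  qed
  have "orth_proj_on N E" unfolding orth_proj_on_def using cbE EN EE symE by blast
  moreover have "orth_proj_on N F" unfolding orth_proj_on_def using cbF FN FF symF by blast
  moreover have "\<forall>x\<in>N. adj_on N T (T x) = E x + r\<^sup>2 *\<^sub>R F x" using adjA[OF N] AEF by simp
  ultimately show ?thesis unfolding CC1r_on_def using N EF by blast
qed

lemma Max:
  assumes red: "reduces T N" and cc: "CC1r_on r N T"
  shows "N \<subseteq> K"
proof
  have N: "subspace N" "\<And>x. x \<in> N \<Longrightarrow> T x \<in> N" "\<And>x. x \<in> N \<Longrightarrow> Ta x \<in> N"
    using red by (auto simp: reduces_within_def closed_csubspace_def Ta_def)
  obtain P0 P1 where P: "orth_proj_on N P0" "orth_proj_on N P1" "\<And>x. x \<in> N \<Longrightarrow> P0 x + P1 x = x"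
    "\<And>x. x \<in> N \<Longrightarrow> adj_on N T (T x) = P0 x + r\<^sup>2 *\<^sub>R P1 x"
    using cc unfolding CC1r_on_def by blast
  have l0: "linear P0" and l1: "linear P1"
    using P(1,2) by (auto simp: orth_proj_on_def cblin_def bounded_linear.linear)
  have P0N: "P0 x \<in> N" and P1N: "P1 x \<in> N" if "x \<in> N" for x
    using P(1,2) that by (auto simp: orth_proj_on_def)
  have P00: "P0 (P0 x) = P0 x" and P11: "P1 (P1 x) = P1 x" if "x \<in> N" for x
    using P(1,2) that by (auto simp: orth_proj_on_def)
  have AP: "A y = P0 y + r\<^sup>2 *\<^sub>R P1 y" if "y \<in> N" for y
    using adjA[OF N that] P(4)[OF that] by simp
  have Dy: "D y = 0" if y: "y \<in> N" for y
  proof -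
    have P10: "P1 (P0 y) = 0" using P(3)[OF P0N[OF y]] P00[OF y] by simp
    have P01: "P0 (P1 y) = 0" using P(3)[OF P1N[OF y]] P11[OF y] by simp
    have A0: "A (P0 y) = P0 y" using AP[OF P0N[OF y]] P00[OF y] P10 by simp
    have A1: "A (P1 y) = r\<^sup>2 *\<^sub>R P1 y" using AP[OF P1N[OF y]] P11[OF y] P01 by simp
    define w where "w = P0 y + (1 / r\<^sup>2) *\<^sub>R P1 y"
    have "A w = P0 y + P1 y" using r0 by (simp add: w_def A.add A.scale A0 A1)
    hence Aw: "A w = y" using P(3)[OF y] by simp
    have Gy: "G y = w" using GA[of w] Aw by simp
    have "D y = (1 + r\<^sup>2) *\<^sub>R (P0 y + P1 y) - (P0 y + r\<^sup>2 *\<^sub>R P1 y) - r\<^sup>2 *\<^sub>R w"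
      using P(3)[OF y] AP[OF y] Gy by (simp add: D_def)
    also have "\<dots> = 0" using r0 by (simp add: w_def algebra_simps)
    finally show ?thesis .
  qed
  fix x assume x: "x \<in> N"
  have "pword T ns ms x \<in> N" for ns ms
    using pword_inv[of N T x ns ms] N x by (simp add: Ta_def)
  thus "x \<in> K" using Dy by (simp add: K_iff)
qed

end



context C1r begin

interpretation T: bounded_linear T by (rule blT)
interpretation S: bounded_linear S by (rule blS)
interpretation Ta: bounded_linear Ta by (rule blTa)

abbreviation "Kp \<equiv> orth K"

lemma Kc: "closed K" "subspace K" "\<And>x. x \<in> K \<Longrightarrow> cJ x \<in> K"
  using K_closed_csubspace by (auto simp: closed_csubspace_def)
lemma Kp_csub: "closed_csubspace Kp" by (rule orth_closed_csubspace[OF K_closed_csubspace])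
lemma Kpc: "closed Kp" "subspace Kp"
  using Kp_csub by (auto simp: closed_csubspace_def)

lemma Kp_T: "y \<in> Kp \<Longrightarrow> T y \<in> Kp" and Kp_Ta: "y \<in> Kp \<Longrightarrow> Ta y \<in> Kp"
  using orth_inv[OF blT, of K] K_T K_Ta by (auto simp: Ta_def)

lemma K_red: "reduces T K"
  using K_closed_csubspace K_T K_Ta by (auto simp: reduces_within_def Ta_def)
lemma Kp_red: "reduces T Kp"
  using Kp_csub Kp_T Kp_Ta by (auto simp: reduces_within_def Ta_def)

lemma K_CC: "CC1r_on r K T"
  by (rule CC1r_L[OF Kc(2) K_T K_Ta K_DA])

lemma K_orth: "\<forall>x\<in>K. \<forall>y\<in>Kp. inner x y = 0" by (auto simp: orth_def)

lemma K_decomp: "{x + y | x y. x \<in> K \<and> y \<in> Kp} = UNIV"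
  using orth_decomp[OF Kc(1,2)] by blast

lemma Kp_S: assumes y: "y \<in> Kp" shows "S y \<in> Kp"
proof -
  obtain a b where ab: "a \<in> K" "b \<in> Kp" "S y = a + b" using orth_decomp[OF Kc(1,2)] by blast
  have "y = T a + T b" using ab(3) TS[of y] by (simp add: T.add)
  hence "T a = y - T b" by simp
  hence "T a \<in> Kp" using y Kp_T[OF ab(2)] Kpc(2) by (simp add: subspace_diff)
  moreover have "T a \<in> K" using K_T[OF ab(1)] .
  ultimately have "T a = 0" using orth_inter[OF Kc(2)] by blast
  hence "a = 0" using ST[of a] by (simp add: S.zero)
  thus ?thesis using ab by simp
qed

lemma red_sub:
  assumes "reduces_within M T N" "subspace M" "\<And>x. x \<in> M \<Longrightarrow> Ta x \<in> M"
  shows "reduces T N"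
proof -
  have "adj_on M T x = Ta x" if "x \<in> N" for x
    using assms that by (intro adj_on_eqI) (auto simp: reduces_within_def Ta)
  thus ?thesis using assms by (auto simp: reduces_within_def Ta_def)
qed

lemma Kp_cnu: "cnu_on r Kp T"
  unfolding cnu_on_def
proof
  show "C1r_on r Kp T" unfolding C1r_on_def
    using Kp_T Kp_S ST TS nT nS by blast
  show "\<not> (\<exists>N. reduces_within Kp T N \<and> N \<noteq> {0} \<and> CC1r_on r N T)"
  proof
    assume "\<exists>N. reduces_within Kp T N \<and> N \<noteq> {0} \<and> CC1r_on r N T"
    then obtain N where N: "reduces_within Kp T N" "N \<noteq> {0}" "CC1r_on r N T" by blast
    have "reduces T N" using red_sub[OF N(1) Kpc(2) Kp_Ta] .
    hence "N \<subseteq> K" using Max N(3) by blast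
    moreover have "N \<subseteq> Kp" using N(1) by (simp add: reduces_within_def)
    moreover have "0 \<in> N" using N(1) by (auto simp: reduces_within_def closed_csubspace_def subspace_0)
    ultimately have "N = {0}" using orth_inter[OF Kc(2)] by blast
    thus False using N(2) by simp
  qed
qed

lemma Uniq:
  assumes H: "closed_csubspace H1" "closed_csubspace H2"
    "\<forall>x\<in>H1. \<forall>y\<in>H2. inner x y = 0"
    "{x + y | x y. x \<in> H1 \<and> y \<in> H2} = UNIV"
    "reduces T H1" "reduces T H2" "CC1r_on r H1 T" "cnu_on r H2 T"
  shows "H1 = K \<and> H2 = Kp"
proof -
  have H1K: "H1 \<subseteq> K" using Max H(5,7) by blast
  have H2s: "subspace H2" "closed H2" "\<And>x. x \<in> H2 \<Longrightarrow> cJ x \<in> H2"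
    using H(2) by (auto simp: closed_csubspace_def)
  have H2T: "\<And>x. x \<in> H2 \<Longrightarrow> T x \<in> H2" "\<And>x. x \<in> H2 \<Longrightarrow> Ta x \<in> H2"
    using H(6) by (auto simp: reduces_within_def Ta_def)
  let ?N = "K \<inter> H2"
  have Ncs: "closed_csubspace ?N"
    using K_closed_csubspace H(2) by (auto simp: closed_csubspace_def subspace_inter closed_Int)
  have "adj_on H2 T x = Ta x" if "x \<in> ?N" for x
    using that H2s H2T by (intro adj_on_eqI) (auto simp: Ta)
  hence Nred: "reduces_within H2 T ?N"
    using Ncs K_T K_Ta H2T by (auto simp: reduces_within_def)
  have NCC: "CC1r_on r ?N T"
    using Ncs K_T K_Ta H2T K_DA by (intro CC1r_L) (auto simp: closed_csubspace_def)
  have N0: "?N = {0}"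
    using H(8) Nred NCC unfolding cnu_on_def by blast
  have KH1: "K \<subseteq> H1"
  proof
    fix x assume x: "x \<in> K"
    obtain a b where ab: "a \<in> H1" "b \<in> H2" "x = a + b" using H(4) by blast
    have "b = x - a" using ab by simp
    hence "b \<in> K" using x H1K ab(1) Kc(2) by (auto simp: subspace_diff)
    hence "b = 0" using N0 ab(2) by blast
    thus "x \<in> H1" using ab by simp
  qed
  have H1eq: "H1 = K" using H1K KH1 by blast
  have "H2 \<subseteq> Kp" using H(3) H1eq by (auto simp: orth_def)
  moreover have "Kp \<subseteq> H2"
  proof
    fix y assume y: "y \<in> Kp"
    obtain a b where ab: "a \<in> H1" "b \<in> H2" "y = a + b" using H(4) by blast
    have "inner a y = 0" using y ab(1) H1eq by (auto simp: orth_def)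
    moreover have "inner a b = 0" using H(3) ab by blast
    ultimately have "inner a a = 0" using ab(3) by (simp add: inner_add_right)
    hence "a = 0" by simp
    thus "y \<in> H2" using ab by simp
  qed
  ultimately show ?thesis using H1eq by blast
qed

end

theorem theorem3p4:
  fixes T :: "'a::complex_hilbert \<Rightarrow> 'a" and r :: real
  assumes "0 < r" and "r < 1"
    and "cblin T" and "C1r_on r UNIV T"
  shows "(\<exists>!p. closed_csubspace (fst p) \<and> closed_csubspace (snd p) \<and>
              (\<forall>x\<in>fst p. \<forall>y\<in>snd p. inner x y = 0) \<and>
              {x + y | x y. x \<in> fst p \<and> y \<in> snd p} = UNIV \<and>
              reduces T (fst p) \<and> reduces T (snd p) \<and>
              CC1r_on r (fst p) T \<and> cnu_on r (snd p) T)
       \<and> (\<forall>H1 H2. closed_csubspace H1 \<and> closed_csubspace H2 \<and>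
              (\<forall>x\<in>H1. \<forall>y\<in>H2. inner x y = 0) \<and>
              {x + y | x y. x \<in> H1 \<and> y \<in> H2} = UNIV \<and>
              reduces T H1 \<and> reduces T H2 \<and>
              CC1r_on r H1 T \<and> cnu_on r H2 T \<longrightarrow>
            (\<forall>N. reduces T N \<and> CC1r_on r N T \<longrightarrow> N \<subseteq> H1) \<and>
            H1 = (\<Inter>k\<in>{1..}. \<Inter>ns\<in>{ns. length ns = k}. \<Inter>ms\<in>{ms. length ms = k}.
                   {x. (1 + r\<^sup>2) * (norm (pword T ns ms x))\<^sup>2
                       - (norm (T (pword T ns ms x)))\<^sup>2
                       - r\<^sup>2 * (norm (adj (inv T) (pword T ns ms x)))\<^sup>2 = 0}))"
proof -
  obtain S where S: "\<And>x. S (T x) = x" "\<And>x. T (S x) = x" "\<And>x. norm (T x) \<le> norm x"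
    "\<And>x. norm (r *\<^sub>R S x) \<le> norm x"
    using assms(4) unfolding C1r_on_def by blast
  interpret C: C1r T r S using assms(1-3) S by unfold_locales auto
  have ex: "closed_csubspace (fst (C.K, C.Kp)) \<and> closed_csubspace (snd (C.K, C.Kp)) \<and>
              (\<forall>x\<in>fst (C.K, C.Kp). \<forall>y\<in>snd (C.K, C.Kp). inner x y = 0) \<and>
              {x + y | x y. x \<in> fst (C.K, C.Kp) \<and> y \<in> snd (C.K, C.Kp)} = UNIV \<and>
              reduces T (fst (C.K, C.Kp)) \<and> reduces T (snd (C.K, C.Kp)) \<and>
              CC1r_on r (fst (C.K, C.Kp)) T \<and> cnu_on r (snd (C.K, C.Kp)) T"
    using C.K_closed_csubspace C.Kp_csub C.K_orth C.K_decomp C.K_red C.Kp_red C.K_CC C.Kp_cnu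
    by simp
  show ?thesis
  proof (intro conjI allI impI)
    show "\<exists>!p. closed_csubspace (fst p) \<and> closed_csubspace (snd p) \<and>
              (\<forall>x\<in>fst p. \<forall>y\<in>snd p. inner x y = 0) \<and>
              {x + y | x y. x \<in> fst p \<and> y \<in> snd p} = UNIV \<and>
              reduces T (fst p) \<and> reduces T (snd p) \<and>
              CC1r_on r (fst p) T \<and> cnu_on r (snd p) T"
    proof (rule ex1I[where a="(C.K, C.Kp)"])
      show "closed_csubspace (fst (C.K, C.Kp)) \<and> closed_csubspace (snd (C.K, C.Kp)) \<and>
              (\<forall>x\<in>fst (C.K, C.Kp). \<forall>y\<in>snd (C.K, C.Kp). inner x y = 0) \<and>
              {x + y | x y. x \<in> fst (C.K, C.Kp) \<and> y \<in> snd (C.K, C.Kp)} = UNIV \<and>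
              reduces T (fst (C.K, C.Kp)) \<and> reduces T (snd (C.K, C.Kp)) \<and>
              CC1r_on r (fst (C.K, C.Kp)) T \<and> cnu_on r (snd (C.K, C.Kp)) T" by (rule ex)
    next
      fix p assume "closed_csubspace (fst p) \<and> closed_csubspace (snd p) \<and>
              (\<forall>x\<in>fst p. \<forall>y\<in>snd p. inner x y = 0) \<and>
              {x + y | x y. x \<in> fst p \<and> y \<in> snd p} = UNIV \<and>
              reduces T (fst p) \<and> reduces T (snd p) \<and>
              CC1r_on r (fst p) T \<and> cnu_on r (snd p) T"
      hence "fst p = C.K \<and> snd p = C.Kp" using C.Uniq by blast
      thus "p = (C.K, C.Kp)" by (simp add: prod_eq_iff)
    qed
  next
    fix H1 H2 assume H: "closed_csubspace H1 \<and> closed_csubspace H2 \<and>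
              (\<forall>x\<in>H1. \<forall>y\<in>H2. inner x y = 0) \<and>
              {x + y | x y. x \<in> H1 \<and> y \<in> H2} = UNIV \<and>
              reduces T H1 \<and> reduces T H2 \<and>
              CC1r_on r H1 T \<and> cnu_on r H2 T"
    hence H1: "H1 = C.K" using C.Uniq by blast
    show "N \<subseteq> H1" if "reduces T N \<and> CC1r_on r N T" for N using C.Max H1 that by blast
    show "H1 = (\<Inter>k\<in>{1..}. \<Inter>ns\<in>{ns. length ns = k}. \<Inter>ms\<in>{ms. length ms = k}.
                   {x. (1 + r\<^sup>2) * (norm (pword T ns ms x))\<^sup>2
                       - (norm (T (pword T ns ms x)))\<^sup>2
                       - r\<^sup>2 * (norm (adj (inv T) (pword T ns ms x)))\<^sup>2 = 0})"
      using H1 by (simp only: C.K_def)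
  qed
qed



end
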